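(* Let $G$ be a topological gyrogroup and let $\phi:G\to\mathbb{R}$ be a continuous bounded function. Then there is a bounded continuous function $\Phi:G^{\bullet}\to\mathbb{R}$ with $\Phi(x^{\bullet})=\phi(x)$ for all $x\in G$, where $x^{\bullet}$ is the constant function with value $x$.
   Context: A gyrogroup is a set $G$ with a binary operation $\oplus$ such that: (G1) there is a unique identity $0$ with $0\oplus a=a=a\oplus 0$; (G2) each $x$ has a unique inverse $\ominus x$ with $\ominus x\oplus x=0=x\oplus(\ominus x)$; (G3) for all $x,y$ there is an automorphism $\mathrm{gyr}[x,y]$ of $(G,\oplus)$ with $x\oplus(y\oplus z)=(x\oplus y)\oplus \mathrm{gyr}[x,y](z)$ for all $z$; (G4) $\mathrm{gyr}[x\oplus y,y]=\mathrm{gyr}[x,y]$. A topological gyrogroup is a gyrogroup with a topology (all spaces are assumed $T_1$) such that $\oplus$ is jointly continuous and $x\mapsto\ominus x$ is continuous. Construction: let $J=[0,1)$ and let $G^{\bullet}$ be the set of all functions $f:J\to G$ for which there exist $0=a_0<a_1<\dots<a_n=1$ with $f$ constant on each $[a_k,a_{k+1})$, with pointwise operation $(f\oplus^{\bullet}g)(r)=f(r)\oplus g(r)$. For an open neighbourhood $V$ of $0$ in $G$ and $\varepsilon>0$ let $O(V,\varepsilon)=\{f\in G^{\bullet}:\mu(\{r\in J: f(r)\notin V\})<\varepsilon\}$, $\mu$ Lebesgue measure. $G^{\bullet}$ carries the topological gyrogroup topology in which the sets $f\oplus^{\bullet}O(V,\varepsilon)$ form a local base at each $f\in G^{\bullet}$.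 *)

theory Defs
  imports "HOL-Analysis.Analysis"
begin

definition gyrogroup :: "('a \<Rightarrow> 'a \<Rightarrow> 'a) \<Rightarrow> 'a \<Rightarrow> bool" where
  "gyrogroup op z \<longleftrightarrow>
     (\<forall>a. op z a = a \<and> op a z = a) \<and>
     (\<forall>x. \<exists>!y. op y x = z \<and> op x y = z) \<and>
     (\<exists>gyr :: 'a \<Rightarrow> 'a \<Rightarrow> 'a \<Rightarrow> 'a.
        (\<forall>x y. bij (gyr x y) \<and>
               (\<forall>a b. gyr x y (op a b) = op (gyr x y a) (gyr x y b)) \<and>
               (\<forall>c. op x (op y c) = op (op x y) (gyr x y c))) \<and>
        (\<forall>x y. gyr (op x y) y = gyr x y))"

definition ginv :: "('a \<Rightarrow> 'a \<Rightarrow> 'a) \<Rightarrow> 'a \<Rightarrow> 'a \<Rightarrow> 'a" where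
  "ginv op z x = (THE y. op y x = z \<and> op x y = z)"

definition top_gyrogroup :: "('a \<Rightarrow> 'a \<Rightarrow> 'a) \<Rightarrow> 'a \<Rightarrow> 'a topology \<Rightarrow> bool" where
  "top_gyrogroup op z T \<longleftrightarrow>
     gyrogroup op z \<and> topspace T = UNIV \<and> t1_space T \<and>
     continuous_map (prod_topology T T) T (\<lambda>(x, y). op x y) \<and>
     continuous_map T T (ginv op z)"

text \<open>G-bullet: step functions on J = [0,1), represented as functions real => 'a
  which take the value z outside J (so that they are determined by their values on J).\<close>
definition step_funs :: "'a \<Rightarrow> (real \<Rightarrow> 'a) set" where
  "step_funs z = {f. (\<forall>r. r \<notin> {0..<1} \<longrightarrow> f r = z) \<and>
     (\<exists>(n::nat) (a::nat \<Rightarrow> real). a 0 = 0 \<and> a n = 1 \<and> (\<forall>k<n. a k < a (Suc k)) \<and>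
        (\<forall>k<n. \<forall>r \<in> {a k..<a (Suc k)}. f r = f (a k)))}"

definition bullet_op :: "('a \<Rightarrow> 'a \<Rightarrow> 'a) \<Rightarrow> (real \<Rightarrow> 'a) \<Rightarrow> (real \<Rightarrow> 'a) \<Rightarrow> (real \<Rightarrow> 'a)" where
  "bullet_op op f g = (\<lambda>r. op (f r) (g r))"

definition bullet_const :: "'a \<Rightarrow> 'a \<Rightarrow> (real \<Rightarrow> 'a)" where
  "bullet_const z x = (\<lambda>r. if r \<in> {0..<1} then x else z)"

definition O_nbhd :: "'a \<Rightarrow> 'a set \<Rightarrow> real \<Rightarrow> (real \<Rightarrow> 'a) set" where
  "O_nbhd z V \<epsilon> = {f \<in> step_funs z. measure lebesgue {r \<in> {0..<1}. f r \<notin> V} < \<epsilon>}"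

definition bullet_topology :: "('a \<Rightarrow> 'a \<Rightarrow> 'a) \<Rightarrow> 'a \<Rightarrow> 'a topology \<Rightarrow> (real \<Rightarrow> 'a) topology" where
  "bullet_topology op z T = topology (\<lambda>U. U \<subseteq> step_funs z \<and>
     (\<forall>f \<in> U. \<exists>V \<epsilon>. openin T V \<and> z \<in> V \<and> \<epsilon> > 0 \<and>
        bullet_op op f ` O_nbhd z V \<epsilon> \<subseteq> U))"

end

theory Submission
  imports Defs
begin


lemma part_mono:
  assumes "\<forall>k<n. a k < (a::nat\<Rightarrow>real) (Suc k)" "i \<le> j" "j \<le> n"
  shows "a i \<le> a j"
  using assms(2,3)
proof (induction j)
  case 0 then show ?case by simp
next
  case (Suc j)
  show ?case
  proof (cases "i = Suc j")
    case False
    then have "i \<le> j" "j < n" using Suc.prems by auto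
    then have "a i \<le> a j" "a j < a (Suc j)" using Suc.IH assms(1) by auto
    then show ?thesis by linarith
  qed simp
qed

lemma part_cover:
  assumes "\<forall>k<n. a k < (a::nat\<Rightarrow>real) (Suc k)" "a 0 = 0" "0 \<le> r" "r < a m" "m \<le> n"
  shows "\<exists>k<m. a k \<le> r \<and> r < a (Suc k)"
  using assms(4,5)
proof (induction m)
  case 0 then show ?case using assms by simp
next
  case (Suc m)
  show ?case
  proof (cases "r < a m")
    case True then show ?thesis using Suc by (metis Suc_leD less_SucI)
  next
    case False then show ?thesis using Suc by (metis lessI not_less)
  qed
qed

lemma part_unique:
  assumes "\<forall>k<n. a k < (a::nat\<Rightarrow>real) (Suc k)" "k < n" "l < n"
    "a k \<le> r" "r < a (Suc k)" "a l \<le> r" "r < a (Suc l)"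
  shows "k = l"
proof (rule ccontr)
  assume "k \<noteq> l"
  then consider "k < l" | "l < k" by linarith
  then show False
  proof cases
    case 1 then have "a (Suc k) \<le> a l" using part_mono[OF assms(1), of "Suc k" l] assms by simp
    then show False using assms by linarith
  next
    case 2 then have "a (Suc l) \<le> a k" using part_mono[OF assms(1), of "Suc l" k] assms by simp
    then show False using assms by linarith
  qed
qed

lemma step_measurable:
  assumes "f \<in> step_funs z"
  shows "(\<lambda>r. \<psi> (f r) :: real) \<in> borel_measurable lebesgue"
proof -
  obtain n a where f0: "\<forall>r. r \<notin> {0..<1} \<longrightarrow> f r = z" and a: "a 0 = 0" "a n = (1::real)"
    "\<forall>k<n. a k < a (Suc k)" "\<forall>k<n. \<forall>r \<in> {a k..<a (Suc k)}. f r = f (a k)"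
    using assms unfolding step_funs_def by blast
  have eq: "\<psi> (f r) = indicator (- {0..<1}) r * \<psi> z +
     (\<Sum>k<n. indicator {a k..<a (Suc k)} r * \<psi> (f (a k)))" for r
  proof (cases "r \<in> {0..<1}")
    case False
    have "indicator {a k..<a (Suc k)} r = (0::real)" if "k < n" for k
    proof -
      have "0 \<le> a k" using part_mono[OF a(3), of 0 k] a that by simp
      moreover have "a (Suc k) \<le> 1" using part_mono[OF a(3), of "Suc k" n] a that by simp
      ultimately show ?thesis using False by (auto simp: indicator_def)
    qed
    then have "(\<Sum>k<n. indicator {a k..<a (Suc k)} r * \<psi> (f (a k))) = (0::real)" by simp
    then show ?thesis using False f0 by simp
  next
    case True
    then obtain k where k: "k < n" "a k \<le> r" "r < a (Suc k)"
      using part_cover[OF a(3) a(1), of r n] a by auto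
    have "(\<Sum>j<n. indicator {a j..<a (Suc j)} r * \<psi> (f (a j))) =
          indicator {a k..<a (Suc k)} r * \<psi> (f (a k))"
    proof -
      have "(\<Sum>j<n. indicator {a j..<a (Suc j)} r * \<psi> (f (a j))) =
            (\<Sum>j<n. if j = k then \<psi> (f (a k)) else (0::real))"
      proof (rule sum.cong)
        fix j assume "j \<in> {..<n}"
        then show "indicator {a j..<a (Suc j)} r * \<psi> (f (a j)) = (if j = k then \<psi> (f (a k)) else 0)"
        proof (cases "j = k")
          case False
          have "r \<notin> {a j..<a (Suc j)}" using part_unique[OF a(3), of j k r] k False \<open>j \<in> {..<n}\<close> by auto
          then show ?thesis using False by simp
        qed (use k in \<open>simp add: indicator_def\<close>)
      qed simp
      also have "\<dots> = \<psi> (f (a k))" using k(1) by simp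
      finally show ?thesis using k by (simp add: indicator_def)
    qed
    moreover have "f r = f (a k)" using a(4) k(1) k(2) k(3) atLeastLessThan_iff by blast
    moreover have "r \<notin> - {0..<1}" using True by simp
    moreover have "indicator {a k..<a (Suc k)} r = (1::real)" using k by simp
    ultimately have s1: "(\<Sum>j<n. indicator {a j..<a (Suc j)} r * \<psi> (f (a j))) = \<psi> (f r)"
      by (simp only: mult_1 indicator_simps)
    have s2: "indicator (- {0..<1}) r = (0::real)" using True by (simp add: indicator_def)
    show ?thesis by (simp only: s1 s2 mult_zero_left add_0)
  qed
  have meas: "(\<lambda>r. indicator (- {0..<1}) r * \<psi> z +
     (\<Sum>k<n. indicator {a k..<a (Suc k)} r * \<psi> (f (a k)))) \<in> borel_measurable lebesgue"
  proof (rule borel_measurable_add, rule_tac [2] borel_measurable_sum)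
    have "{0..<1::real} \<in> sets lebesgue" by simp
    have e: "- {0..<1::real} = {..<0} \<union> {1..}" by auto
    have "- {0..<1::real} \<in> sets lebesgue" unfolding e by (intro sets.Un) simp_all
    then show "(\<lambda>x::real. indicator (- {0..<1}) x * \<psi> z) \<in> borel_measurable lebesgue"
      by (intro borel_measurable_times borel_measurable_indicator borel_measurable_const)
  next
    fix i
    have "{a i..<a (Suc i)} \<in> sets lebesgue" by simp
    then show "(\<lambda>x. indicator {a i..<a (Suc i)} x * \<psi> (f (a i))) \<in> borel_measurable lebesgue"
      by (intro borel_measurable_times borel_measurable_indicator borel_measurable_const)
  qed
  show ?thesis
    by (rule measurable_cong[THEN iffD2, OF _ meas]) (rule eq)
qed

lemma step_finite_range:
  assumes "f \<in> step_funs z"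
  shows "finite (range f)"
proof -
  obtain n a where f0: "\<forall>r. r \<notin> {0..<1} \<longrightarrow> f r = z" and a: "a 0 = 0" "a n = (1::real)"
    "\<forall>k<n. a k < a (Suc k)" "\<forall>k<n. \<forall>r \<in> {a k..<a (Suc k)}. f r = f (a k)"
    using assms unfolding step_funs_def by blast
  have "range f \<subseteq> insert z ((\<lambda>k. f (a k)) ` {..<n})"
  proof
    fix y assume "y \<in> range f"
    then obtain r where y: "y = f r" by blast
    show "y \<in> insert z ((\<lambda>k. f (a k)) ` {..<n})"
    proof (cases "r \<in> {0..<1}")
      case False then show ?thesis using f0 y by simp
    next
      case True
      then obtain k where k: "k < n" "a k \<le> r" "r < a (Suc k)"
        using part_cover[OF a(3) a(1), of r n] a by auto
      have "f r = f (a k)" using a(4) k(1) k(2) k(3) atLeastLessThan_iff by blast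
      then show ?thesis using y k(1) by blast
    qed
  qed
  then show ?thesis by (rule finite_subset) simp
qed

lemma step_measurable2:
  assumes "f \<in> step_funs z" "g \<in> step_funs z"
  shows "(\<lambda>r. \<psi> (f r) (g r) :: real) \<in> borel_measurable lebesgue"
proof -
  have fin: "finite (range f)" by (rule step_finite_range[OF assms(1)])
  have eq: "\<psi> (f r) (g r) = (\<Sum>c\<in>range f. (if f r = c then 1 else 0) * \<psi> c (g r))" for r
  proof -
    have "(\<Sum>c\<in>range f. (if f r = c then 1 else 0) * \<psi> c (g r)) =
          (\<Sum>c\<in>range f. if f r = c then \<psi> c (g r) else 0)"
      by (rule sum.cong) auto
    also have "\<dots> = \<psi> (f r) (g r)" using fin by (simp add: sum.delta)
    finally show ?thesis by simp
  qed
  have meas: "(\<lambda>r. \<Sum>c\<in>range f. (if f r = c then 1 else 0) * \<psi> c (g r)) \<in> borel_measurable lebesgue"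
  proof (rule borel_measurable_sum)
    fix c
    show "(\<lambda>r. (if f r = c then 1 else 0) * \<psi> c (g r)) \<in> borel_measurable lebesgue"
      by (rule borel_measurable_times[OF step_measurable[OF assms(1)] step_measurable[OF assms(2)]])
  qed
  show ?thesis
    by (rule measurable_cong[THEN iffD2, OF _ meas]) (rule eq)
qed

lemma step_set_lmeasurable:
  assumes "g \<in> step_funs z"
  shows "{r \<in> {0..<1}. Q (g r)} \<in> lmeasurable"
proof -
  have m: "(\<lambda>r. if Q (g r) then 1 else 0 :: real) \<in> borel_measurable lebesgue"
    by (rule step_measurable[OF assms])
  have "{w \<in> space lebesgue. (if Q (g w) then 1 else 0 :: real) = 1} \<in> sets lebesgue"
    by (rule borel_measurable_eq[OF m borel_measurable_const])
  moreover have "space lebesgue = (UNIV :: real set)" by simp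
  moreover have "{w. (if Q (g w) then 1 else 0 :: real) = 1} = {w. Q (g w)}" by auto
  ultimately have "{w. Q (g w)} \<in> sets lebesgue" by simp
  moreover have "{0..<1::real} \<in> sets lebesgue" by simp
  ultimately have "{w. Q (g w)} \<inter> {0..<1} \<in> sets lebesgue" by (rule sets.Int)
  moreover have "{r \<in> {0..<1}. Q (g r)} = {w. Q (g w)} \<inter> {0..<1}" by auto
  ultimately have "{r \<in> {0..<1}. Q (g r)} \<in> sets lebesgue" by simp
  moreover have "bounded {r \<in> {0..<1::real}. Q (g r)}"
    by (rule bounded_subset[of "{0..1}"]) auto
  ultimately show ?thesis by (intro bounded_set_imp_lmeasurable)
qed

lemma O_mono:
  assumes "V' \<subseteq> V" "e' \<le> e"
  shows "O_nbhd z V' e' \<subseteq> O_nbhd z V e"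
proof
  fix g assume g: "g \<in> O_nbhd z V' e'"
  then have gs: "g \<in> step_funs z" and m: "measure lebesgue {r \<in> {0..<1}. g r \<notin> V'} < e'"
    unfolding O_nbhd_def by auto
  have "measure lebesgue {r \<in> {0..<1}. g r \<notin> V} \<le> measure lebesgue {r \<in> {0..<1}. g r \<notin> V'}"
    by (rule measure_mono_fmeasurable) (use assms(1) step_set_lmeasurable[OF gs] in auto)
  then show "g \<in> O_nbhd z V e" using gs m assms(2) unfolding O_nbhd_def by auto
qed

lemma bt_open:
  "openin (bullet_topology op z T) U \<longleftrightarrow> U \<subseteq> step_funs z \<and>
     (\<forall>f \<in> U. \<exists>V \<epsilon>. openin T V \<and> z \<in> V \<and> \<epsilon> > 0 \<and>
        bullet_op op f ` O_nbhd z V \<epsilon> \<subseteq> U)"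
proof -
  let ?P = "\<lambda>U. U \<subseteq> step_funs z \<and>
     (\<forall>f \<in> U. \<exists>V \<epsilon>. openin T V \<and> z \<in> V \<and> \<epsilon> > 0 \<and>
        bullet_op op f ` O_nbhd z V \<epsilon> \<subseteq> U)"
  have I1: "\<forall>S U. ?P S \<longrightarrow> ?P U \<longrightarrow> ?P (S \<inter> U)"
  proof (intro allI impI)
    fix S U assume S: "?P S" and U: "?P U"
    show "?P (S \<inter> U)"
    proof (intro conjI ballI)
      show "S \<inter> U \<subseteq> step_funs z" using S by auto
    next
      fix f assume f: "f \<in> S \<inter> U"
      obtain V1 e1 where 1: "openin T V1" "z \<in> V1" "e1 > 0" "bullet_op op f ` O_nbhd z V1 e1 \<subseteq> S"
        using S f by blast
      obtain V2 e2 where 2: "openin T V2" "z \<in> V2" "e2 > 0" "bullet_op op f ` O_nbhd z V2 e2 \<subseteq> U"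
        using U f by blast
      have "O_nbhd z (V1 \<inter> V2) (min e1 e2) \<subseteq> O_nbhd z V1 e1" by (rule O_mono) auto
      moreover have "O_nbhd z (V1 \<inter> V2) (min e1 e2) \<subseteq> O_nbhd z V2 e2" by (rule O_mono) auto
      ultimately have "bullet_op op f ` O_nbhd z (V1 \<inter> V2) (min e1 e2) \<subseteq> S \<inter> U"
        using 1(4) 2(4) by blast
      moreover have "openin T (V1 \<inter> V2)" using 1 2 by auto
      ultimately show "\<exists>V \<epsilon>. openin T V \<and> z \<in> V \<and> \<epsilon> > 0 \<and>
        bullet_op op f ` O_nbhd z V \<epsilon> \<subseteq> S \<inter> U"
        using 1 2 by (intro exI[of _ "V1 \<inter> V2"] exI[of _ "min e1 e2"]) auto
    qed
  qed
  have I2: "\<forall>K. (\<forall>U\<in>K. ?P U) \<longrightarrow> ?P (\<Union>K)"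
  proof (intro allI impI)
    fix K assume K: "\<forall>U\<in>K. ?P U"
    show "?P (\<Union>K)"
    proof (intro conjI ballI)
      show "\<Union>K \<subseteq> step_funs z" using K by auto
    next
      fix f assume "f \<in> \<Union>K"
      then obtain U where U: "U \<in> K" "f \<in> U" by blast
      have PU: "?P U" by (rule bspec[OF K U(1)])
      then have "\<forall>f\<in>U. \<exists>V \<epsilon>. openin T V \<and> z \<in> V \<and> \<epsilon> > 0 \<and>
        bullet_op op f ` O_nbhd z V \<epsilon> \<subseteq> U" by (rule conjunct2)
      then obtain V e where Ve: "openin T V" "z \<in> V" "e > 0" "bullet_op op f ` O_nbhd z V e \<subseteq> U"
        using U(2) by blast
      have "U \<subseteq> \<Union>K" using U(1) by blast
      then have "bullet_op op f ` O_nbhd z V e \<subseteq> \<Union>K" using Ve(4) by (rule_tac order_trans) 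
      then show "\<exists>V \<epsilon>. openin T V \<and> z \<in> V \<and> \<epsilon> > 0 \<and>
        bullet_op op f ` O_nbhd z V \<epsilon> \<subseteq> \<Union>K" using Ve(1-3) by blast
    qed
  qed
  have "istopology ?P" unfolding istopology_def using I1 I2 by blast
  then show ?thesis unfolding bullet_topology_def by (simp add: topology_inverse')
qed

definition Phi :: "('a \<Rightarrow> real) \<Rightarrow> (real \<Rightarrow> 'a) \<Rightarrow> real" where
  "Phi \<phi> f = integral\<^sup>L lebesgue (\<lambda>r. indicator {0..<1} r * \<phi> (f r))"

lemma J_lmeas: "{0..<1::real} \<in> lmeasurable"
proof (rule bounded_set_imp_lmeasurable)
  show "bounded {0..<1::real}" by (rule bounded_subset[of "{0..1}"]) auto
qed simp

lemma J_measure: "measure lebesgue {0..<1::real} = 1" by simp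

lemma int_J:
  fixes h :: "real \<Rightarrow> real"
  assumes "h \<in> borel_measurable lebesgue" "\<And>r. \<bar>h r\<bar> \<le> B"
  shows "integrable lebesgue (\<lambda>r. indicator {0..<1::real} r * h r)"
proof (rule Bochner_Integration.integrable_bound)
  show "integrable lebesgue (\<lambda>r. indicator {0..<1::real} r * B)"
    by (rule integrable_mult_left) (use J_lmeas lmeasurable_iff_integrable in auto)
  show "(\<lambda>r. indicator {0..<1::real} r * h r) \<in> borel_measurable lebesgue"
    using assms(1) by (intro borel_measurable_times borel_measurable_indicator) simp_all
  show "AE x in lebesgue. norm (indicator {0..<1::real} x * h x) \<le> norm (indicator {0..<1::real} x * B)"
  proof (rule AE_I2)
    fix x
    have "0 \<le> B" using assms(2)[of x] by linarith
    then show "norm (indicator {0..<1::real} x * h x) \<le> norm (indicator {0..<1::real} x * B)"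
      using assms(2)[of x] by (auto simp: indicator_def)
  qed
qed

lemma key:
  fixes \<phi> :: "'a \<Rightarrow> real"
  assumes cont: "continuous_map (prod_topology T T) T (\<lambda>(x, y). op x y)"
    and top: "topspace T = UNIV" and idr: "\<forall>a. op a z = a"
    and phic: "continuous_map T euclideanreal \<phi>" and B: "\<forall>x. \<bar>\<phi> x\<bar> \<le> B" "B > 0"
    and f: "f \<in> step_funs z" and d: "\<delta> > 0"
  shows "\<exists>V \<epsilon>. openin T V \<and> z \<in> V \<and> \<epsilon> > 0 \<and>
           (\<forall>g\<in>O_nbhd z V \<epsilon>. \<bar>Phi \<phi> (bullet_op op f g) - Phi \<phi> f\<bar> < \<delta>)"
proof -
  define W where "W c = {v \<in> topspace T. \<phi> (op c v) \<in> ball (\<phi> c) (\<delta>/2)}" for c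
  have Wo: "openin T (W c)" for c
  proof -
    have "continuous_map T (prod_topology T T) (\<lambda>v. (c, v))"
      by (rule continuous_map_pairedI) (auto simp: top)
    from continuous_map_compose[OF this cont] have "continuous_map T T (\<lambda>v. op c v)"
      by (simp add: o_def)
    from continuous_map_compose[OF this phic] have "continuous_map T euclideanreal (\<lambda>v. \<phi> (op c v))"
      by (simp add: o_def)
    then show ?thesis unfolding W_def by (rule openin_continuous_map_preimage) simp
  qed
  have zW: "z \<in> W c" for c using d idr top by (simp add: W_def)
  have fin: "finite (range f)" by (rule step_finite_range[OF f])
  define V where "V = \<Inter> (W ` range f)"
  have Vo: "openin T V" unfolding V_def
    by (rule openin_Inter) (use fin Wo in auto)
  have zV: "z \<in> V" unfolding V_def using zW by blast
  define \<epsilon> where "\<epsilon> = \<delta> / (4 * B)"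
  have e0: "\<epsilon> > 0" unfolding \<epsilon>_def using d B(2) by simp
  have main: "\<bar>Phi \<phi> (bullet_op op f g) - Phi \<phi> f\<bar> < \<delta>" if g: "g \<in> O_nbhd z V \<epsilon>" for g
  proof -
    define E where "E = {r \<in> {0..<1}. g r \<notin> V}"
    have gs: "g \<in> step_funs z" and mE: "measure lebesgue E < \<epsilon>"
      using g unfolding O_nbhd_def E_def by auto
    have Elm: "E \<in> lmeasurable" unfolding E_def by (rule step_set_lmeasurable[OF gs])
    define h1 where "h1 r = \<phi> (op (f r) (g r))" for r
    define h0 where "h0 r = \<phi> (f r)" for r
    have m1: "h1 \<in> borel_measurable lebesgue" unfolding h1_def
      by (rule step_measurable2[OF f gs])
    have m0: "h0 \<in> borel_measurable lebesgue" unfolding h0_def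
      by (rule step_measurable[OF f])
    have i1: "integrable lebesgue (\<lambda>r. indicator {0..<1::real} r * h1 r)"
      by (rule int_J[OF m1, where B=B]) (use B in \<open>simp add: h1_def\<close>)
    have i0: "integrable lebesgue (\<lambda>r. indicator {0..<1::real} r * h0 r)"
      by (rule int_J[OF m0, where B=B]) (use B in \<open>simp add: h0_def\<close>)
    have iJ: "integrable lebesgue (indicator {0..<1::real} :: real \<Rightarrow> real)"
      using J_lmeas lmeasurable_iff_integrable by blast
    have iE: "integrable lebesgue (indicator E :: real \<Rightarrow> real)"
      using Elm lmeasurable_iff_integrable by blast
    have iB: "integrable lebesgue (\<lambda>r. \<delta>/2 * indicator {0..<1::real} r + 2 * B * indicator E r)"
      using iJ iE by (intro Bochner_Integration.integrable_add integrable_mult_right) auto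
    have P1: "Phi \<phi> (bullet_op op f g) = integral\<^sup>L lebesgue (\<lambda>r. indicator {0..<1::real} r * h1 r)"
      unfolding Phi_def bullet_op_def h1_def by simp
    have P0: "Phi \<phi> f = integral\<^sup>L lebesgue (\<lambda>r. indicator {0..<1::real} r * h0 r)"
      unfolding Phi_def h0_def by simp
    have "Phi \<phi> (bullet_op op f g) - Phi \<phi> f =
       integral\<^sup>L lebesgue (\<lambda>r. indicator {0..<1::real} r * h1 r - indicator {0..<1::real} r * h0 r)"
      unfolding P1 P0 by (rule Bochner_Integration.integral_diff[OF i1 i0, symmetric])
    also have "\<bar>\<dots>\<bar> \<le> integral\<^sup>L lebesgue (\<lambda>r. \<delta>/2 * indicator {0..<1::real} r + 2 * B * indicator E r)"
    proof (rule integral_abs_bound_integral)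
      show "integrable lebesgue (\<lambda>r. indicator {0..<1::real} r * h1 r - indicator {0..<1::real} r * h0 r)"
        using i1 i0 by (rule Bochner_Integration.integrable_diff)
      show "integrable lebesgue (\<lambda>r. \<delta>/2 * indicator {0..<1::real} r + 2 * B * indicator E r)"
        by (rule iB)
    next
      fix r :: real
      show "\<bar>indicator {0..<1::real} r * h1 r - indicator {0..<1::real} r * h0 r\<bar>
            \<le> \<delta>/2 * indicator {0..<1::real} r + 2 * B * indicator E r"
      proof (cases "r \<in> {0..<1}")
        case False
        then have "r \<notin> E" unfolding E_def by blast
        then show ?thesis using False by simp
      next
        case True
        show ?thesis
        proof (cases "g r \<in> V")
          case True2: True
          have "g r \<in> W (f r)" using True2 unfolding V_def by blast
          then have "dist (\<phi> (f r)) (h1 r) < \<delta>/2" unfolding W_def h1_def by simp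
          then have "\<bar>h1 r - h0 r\<bar> < \<delta>/2" unfolding h0_def dist_real_def by linarith
          moreover have "0 \<le> 2 * B * indicator E r" using B(2) by simp
          ultimately show ?thesis using True by simp
        next
          case False
          then have "r \<in> E" unfolding E_def using True by blast
          moreover have "\<bar>h1 r - h0 r\<bar> \<le> 2 * B"
            using B(1)[rule_format, of "op (f r) (g r)"] B(1)[rule_format, of "f r"]
            unfolding h1_def h0_def by linarith
          ultimately show ?thesis using True d by simp
        qed
      qed
    qed
    also have "integral\<^sup>L lebesgue (\<lambda>r. \<delta>/2 * indicator {0..<1::real} r + 2 * B * indicator E r)
        = \<delta>/2 * measure lebesgue {0..<1::real} + 2 * B * measure lebesgue E"
      using iJ iE by (simp add: Bochner_Integration.integral_add integral_mult_right)
    also have "\<dots> < \<delta>"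
    proof -
      have "2 * B * measure lebesgue E < 2 * B * \<epsilon>" using mE B(2) by simp
      also have "2 * B * \<epsilon> = \<delta> / 2" unfolding \<epsilon>_def using B(2) by simp
      finally show ?thesis using J_measure by simp
    qed
    finally show ?thesis .
  qed
  show ?thesis using Vo zV e0 main by blast
qed

theorem mainTheorem7:
  fixes op :: "'a \<Rightarrow> 'a \<Rightarrow> 'a" and z :: 'a and T :: "'a topology" and \<phi> :: "'a \<Rightarrow> real"
  assumes "top_gyrogroup op z T"
    and "continuous_map T euclideanreal \<phi>"
    and "bounded (range \<phi>)"
  shows "\<exists>\<Phi> :: (real \<Rightarrow> 'a) \<Rightarrow> real.
           continuous_map (bullet_topology op z T) euclideanreal \<Phi> \<and>
           bounded (\<Phi> ` step_funs z) \<and>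
           (\<forall>x. \<Phi> (bullet_const z x) = \<phi> x)"
proof -
  have gg: "gyrogroup op z" and top: "topspace T = UNIV"
    and cont: "continuous_map (prod_topology T T) T (\<lambda>(x, y). op x y)"
    using assms(1) unfolding top_gyrogroup_def by auto
  have idr: "\<forall>a. op a z = a" using gg unfolding gyrogroup_def by blast
  obtain M where M: "\<forall>x\<in>range \<phi>. norm x \<le> M" using assms(3) bounded_iff by blast
  define B where "B = \<bar>M\<bar> + 1"
  have B1: "\<forall>x. \<bar>\<phi> x\<bar> \<le> B"
  proof
    fix x have "norm (\<phi> x) \<le> M" using M by blast
    then show "\<bar>\<phi> x\<bar> \<le> B" unfolding B_def by simp
  qed
  have B2: "B > 0" unfolding B_def by simp
  note B = B1 B2
  let ?X = "bullet_topology op z T"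
  have iJ: "integrable lebesgue (indicator {0..<1::real} :: real \<Rightarrow> real)"
    using J_lmeas lmeasurable_iff_integrable by blast
  have bnd: "\<bar>Phi \<phi> f\<bar> \<le> B" if f: "f \<in> step_funs z" for f
  proof -
    have "\<bar>Phi \<phi> f\<bar> \<le> integral\<^sup>L lebesgue (\<lambda>r. B * indicator {0..<1::real} r)"
      unfolding Phi_def
    proof (rule integral_abs_bound_integral)
      show "integrable lebesgue (\<lambda>r. indicator {0..<1::real} r * \<phi> (f r))"
        by (rule int_J[where B=B, OF step_measurable[OF f]]) (use B in simp)
      show "integrable lebesgue (\<lambda>r. B * indicator {0..<1::real} r)"
        using iJ by (rule integrable_mult_right)
    next
      fix r :: real
      show "\<bar>indicator {0..<1::real} r * \<phi> (f r)\<bar> \<le> B * indicator {0..<1::real} r"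
        using B by (simp add: indicator_def)
    qed
    also have "\<dots> = B" using J_measure by simp
    finally show ?thesis .
  qed
  have const: "Phi \<phi> (bullet_const z x) = \<phi> x" for x
  proof -
    have "(\<lambda>r. indicator {0..<1::real} r * \<phi> (bullet_const z x r)) = (\<lambda>r. \<phi> x * indicator {0..<1::real} r)"
      by (rule ext) (simp add: bullet_const_def indicator_def)
    then have "Phi \<phi> (bullet_const z x) = integral\<^sup>L lebesgue (\<lambda>r. \<phi> x * indicator {0..<1::real} r)"
      unfolding Phi_def by simp
    also have "\<dots> = \<phi> x" using J_measure by simp
    finally show ?thesis .
  qed
  have topX: "topspace ?X \<subseteq> step_funs z \<and>
     (\<forall>f \<in> topspace ?X. \<exists>V \<epsilon>. openin T V \<and> z \<in> V \<and> \<epsilon> > 0 \<and>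
        bullet_op op f ` O_nbhd z V \<epsilon> \<subseteq> topspace ?X)"
    using openin_topspace[of ?X] unfolding bt_open .
  have contP: "continuous_map ?X euclideanreal (Phi \<phi>)"
    unfolding continuous_map_def
  proof (intro conjI allI impI)
    show "Phi \<phi> \<in> topspace ?X \<rightarrow> topspace euclideanreal" by simp
  next
    fix U :: "real set" assume "openin euclideanreal U"
    then have oU: "open U" by simp
    show "openin ?X {x \<in> topspace ?X. Phi \<phi> x \<in> U}"
      unfolding bt_open
    proof (intro conjI ballI)
      show "{x \<in> topspace ?X. Phi \<phi> x \<in> U} \<subseteq> step_funs z" using topX by blast
    next
      fix f assume fU: "f \<in> {x \<in> topspace ?X. Phi \<phi> x \<in> U}"
      then have ftop: "f \<in> topspace ?X" and fs: "f \<in> step_funs z" using topX by auto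
      obtain \<delta> where d: "\<delta> > 0" "ball (Phi \<phi> f) \<delta> \<subseteq> U"
        using oU fU open_contains_ball by blast
      obtain V1 e1 where 1: "openin T V1" "z \<in> V1" "e1 > 0"
        "\<forall>g\<in>O_nbhd z V1 e1. \<bar>Phi \<phi> (bullet_op op f g) - Phi \<phi> f\<bar> < \<delta>"
        using key[OF cont top idr assms(2) B fs d(1)] by blast
      obtain V2 e2 where 2: "openin T V2" "z \<in> V2" "e2 > 0"
        "bullet_op op f ` O_nbhd z V2 e2 \<subseteq> topspace ?X"
        using topX ftop by blast
      have s1: "O_nbhd z (V1 \<inter> V2) (min e1 e2) \<subseteq> O_nbhd z V1 e1" by (rule O_mono) auto
      have s2: "O_nbhd z (V1 \<inter> V2) (min e1 e2) \<subseteq> O_nbhd z V2 e2" by (rule O_mono) auto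
      have "bullet_op op f ` O_nbhd z (V1 \<inter> V2) (min e1 e2) \<subseteq> {x \<in> topspace ?X. Phi \<phi> x \<in> U}"
      proof
        fix h assume "h \<in> bullet_op op f ` O_nbhd z (V1 \<inter> V2) (min e1 e2)"
        then obtain g where g: "g \<in> O_nbhd z (V1 \<inter> V2) (min e1 e2)" and h: "h = bullet_op op f g"
          by blast
        have "h \<in> topspace ?X" using 2(4) s2 g h by blast
        moreover have "\<bar>Phi \<phi> h - Phi \<phi> f\<bar> < \<delta>" using 1(4) s1 g h by blast
        then have "Phi \<phi> h \<in> ball (Phi \<phi> f) \<delta>" by (simp add: dist_real_def)
        ultimately show "h \<in> {x \<in> topspace ?X. Phi \<phi> x \<in> U}" using d(2) by blast
      qed
      moreover have "openin T (V1 \<inter> V2)" using 1 2 by auto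
      ultimately show "\<exists>V \<epsilon>. openin T V \<and> z \<in> V \<and> \<epsilon> > 0 \<and>
        bullet_op op f ` O_nbhd z V \<epsilon> \<subseteq> {x \<in> topspace ?X. Phi \<phi> x \<in> U}"
        using 1(2,3) 2(2,3) by (intro exI[of _ "V1 \<inter> V2"] exI[of _ "min e1 e2"]) auto
    qed
  qed
  have "bounded (Phi \<phi> ` step_funs z)"
    unfolding bounded_iff using bnd by auto
  then show ?thesis using contP const by blast
qed

end
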